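(* Let $q=p^m$ with $p$ an odd prime and $m$ a positive integer. Let $\delta\in\mathbb{F}_{q^2}$, $b_1,b_2,b_3\in\mathbb{F}_q$, let $\varepsilon$ be a primitive element of $\mathbb{F}_{q^2}$, let $d_1,d_2,d_3$ be odd integers and $t=(q+1)/2$. Let $i$ be a non-negative integer with $i<2m$, let $j$ be the integer with $0\leq j<m$ and $j\equiv i\pmod m$, and let $d=\gcd(m,j)$. Let $$P(x)=b_1\varepsilon^{td_1}(x^q+x+\delta)^{p^i+q}+b_2\varepsilon^{td_2}(x^q+x+\delta)^{p^i+1}+b_3\varepsilon^{td_3}(x^q+x+\delta)^{2p^i}-x,$$ and put $$A=(\delta^q-\delta)(b_1\varepsilon^{td_1}-b_2\varepsilon^{td_2})+2b_3\varepsilon^{td_3}(\delta^{p^i}-\delta^{p^iq}),$$ $$B=1+(\delta^{p^iq}-\delta^{p^i})(b_1\varepsilon^{td_1}+b_2\varepsilon^{td_2}),$$ $$C=(\delta^{p^i+q}-\delta^{p^iq+1})b_1\varepsilon^{td_1}+(\delta^{p^i+1}-\delta^{p^iq+q})b_2\varepsilon^{td_2}+(\delta^{2p^i}-\delta^{2p^iq})b_3\varepsilon^{td_3}.$$ For $y$ define $G(y)=b_1\varepsilon^{td_1}y^{p^i+q}+b_2\varepsilon^{td_2}y^{p^i+1}+b_3\varepsilon^{td_3}y^{2p^i}$. Then: (1) If $i\in\{0,m\}$, then $P$ permutes $\mathbb{F}_{q^2}$ if and only if $A-B\neq0$, and in that case $P^{-1}(x)=G\!\left((A-B)^{-1}(x^q+x)-(A-B)^{-1}C+\delta\right)-x$.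 (2) If $i\notin\{0,m\}$, $A=0$ and $B\neq0$, then $P$ permutes $\mathbb{F}_{q^2}$ and $P^{-1}(x)=G\!\left(-B^{-1}(x^q+x)+B^{-1}C+\delta\right)-x$. (3) If $i\notin\{0,m\}$, $A\neq0$ and $B=0$, then $P$ permutes $\mathbb{F}_{q^2}$ and $P^{-1}(x)=G\!\left(A^{-p^{m-j}}(x^q+x)^{p^{m-j}}-(C/A)^{p^{m-j}}+\delta\right)-x$. (4) If $i\notin\{0,m\}$ and $AB\neq0$, then $P$ permutes $\mathbb{F}_{q^2}$ if and only if $N_{p^m/p^d}(B/A)\neq1$, and in that case $$P^{-1}(x)=G\!\left(\delta+\frac{N_{p^m/p^d}(B/A)}{1-N_{p^m/p^d}(B/A)}\sum_{k=0}^{m/d-1}\left(\frac{A}{B}\right)^{\frac{p^{(k+1)j}-1}{p^j-1}}\left(\frac{x^q+x}{A}-\frac{C}{A}\right)^{p^{kj}}\right)-x.$$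
   Context: For $a\in\mathbb{F}_{p^m}$ and $d\mid m$, $N_{p^m/p^d}(a)=a^{(p^m-1)/(p^d-1)}$ is the norm to $\mathbb{F}_{p^d}$. The compositional inverse of a permutation polynomial $f$ of $\mathbb{F}_{Q}$ is the unique polynomial $f^{-1}$ (modulo $x^Q-x$) with $f(f^{-1}(c))=f^{-1}(f(c))=c$ for all $c\in\mathbb{F}_Q$. The auxiliary notation $G$ is only shorthand for writing out the three-term expression. *)

theory Defs
  imports Main "HOL-Computational_Algebra.Primes"
begin

definition primitive_elem :: "'a::{field,finite} \<Rightarrow> bool" where
  "primitive_elem e \<longleftrightarrow> e \<noteq> 0 \<and> (\<forall>y. y \<noteq> 0 \<longrightarrow> (\<exists>k::nat. y = e ^ k))"

definition normF :: "nat \<Rightarrow> nat \<Rightarrow> nat \<Rightarrow> 'a::field \<Rightarrow> 'a" where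
  "normF p m d a = a ^ ((p ^ m - 1) div (p ^ d - 1))"

end

theory Submission
  imports Defs "HOL-Number_Theory.Cong"
begin

lemma geom_nat:
  fixes x :: nat assumes "x \<ge> 1"
  shows "x ^ n - 1 = (x - 1) * (\<Sum>l<n. x ^ l)"
proof -
  have "int (x ^ n - 1) = int x ^ n - 1" using assms by (simp add: of_nat_diff one_le_power)
  also have "... = (int x - 1) * (\<Sum>l<n. int x ^ l)" by (rule power_diff_1_eq)
  also have "... = int ((x - 1) * (\<Sum>l<n. x ^ l))" using assms by (simp add: of_nat_diff)
  finally show ?thesis by (simp only: of_nat_eq_iff)
qed

lemma geom_div:
  fixes x :: nat assumes "x \<ge> 2"
  shows "(x ^ n - 1) div (x - 1) = (\<Sum>l<n. x ^ l)"
  using geom_nat[of x n] assms by simp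

lemma pow_minus_one_dvd:
  fixes x :: nat assumes "x \<ge> 1"
  shows "(x ^ n - 1) dvd (x ^ (n * k) - 1)"
  using geom_nat[of "x ^ n" k] assms by (simp add: power_mult one_le_power)

lemma gcd_pow_minus_one:
  fixes x :: nat assumes x1: "x \<ge> 1"
  shows "gcd (x ^ a - 1) (x ^ b - 1) = x ^ (gcd a b) - 1"
proof (induction a b rule: gcd_nat_induct)
  case (base m)
  then show ?case by simp
next
  case (step m n)
  define r where "r = m mod n"
  define k where "k = m div n"
  have mdec: "m = n * k + r" unfolding r_def k_def by simp
  obtain K where K: "x ^ (n * k) - 1 = (x ^ n - 1) * K"
    using pow_minus_one_dvd[OF x1, of n k] by (auto elim: dvdE)
  have ge1: "x ^ r \<ge> 1" "x ^ (n * k) \<ge> 1" using x1 by (simp_all add: one_le_power)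
  have "x ^ m - 1 = x ^ r * (x ^ (n * k) - 1) + (x ^ r - 1)"
    unfolding mdec using ge1 by (simp add: power_add diff_mult_distrib2 algebra_simps)
  also have "... = (x ^ r * K) * (x ^ n - 1) + (x ^ r - 1)" using K by simp
  finally have xm: "x ^ m - 1 = (x ^ r * K) * (x ^ n - 1) + (x ^ r - 1)" .
  have "gcd (x ^ m - 1) (x ^ n - 1) = gcd (x ^ n - 1) ((x ^ r * K) * (x ^ n - 1) + (x ^ r - 1))"
    unfolding xm by (simp add: gcd.commute)
  also have "... = gcd (x ^ n - 1) (x ^ r - 1)" by (rule gcd_add_mult)
  also have "... = x ^ gcd n r - 1" using step r_def by simp
  also have "gcd n r = gcd m n" unfolding r_def using step by (metis gcd_red_nat gcd.commute)
  finally show ?case .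
qed


lemma of_nat_card_UNIV_zero: "of_nat (card (UNIV :: 'a::{ring_1,finite} set)) = (0::'a)"
proof -
  have "(\<Sum>y\<in>(UNIV::'a set). y + 1) = (\<Sum>y\<in>UNIV. y)"
    by (rule sum.reindex_bij_witness[of _ "\<lambda>y. y - 1" "\<lambda>y. y + 1"]) auto
  then show ?thesis by (simp add: sum.distrib)
qed

lemma pow_card_same:
  fixes x :: "'a::{field,finite}"
  shows "x ^ card (UNIV :: 'a set) = x"
proof (cases "x = 0")
  case False
  have "x * (\<Prod>y\<in>UNIV-{0}. x * y) = x * x ^ (card (UNIV :: 'a set) - 1) * \<Prod>(UNIV-{0})"
    by (simp add: prod.distrib mult_ac)
  also have "x * x ^ (card (UNIV :: 'a set) - 1) = x ^ Suc (card (UNIV :: 'a set) - 1)"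
    by (subst power_Suc) auto
  also have "Suc (card (UNIV :: 'a set) - 1) = card (UNIV :: 'a set)"
    using finite_UNIV_card_ge_0[where ?'a = 'a] by simp
  also have "(\<Prod>y\<in>UNIV-{0}. x * y) = (\<Prod>y\<in>UNIV-{0}. y)"
    by (rule prod.reindex_bij_witness[of _ "\<lambda>y. y / x" "\<lambda>y. x * y"]) (use False in auto)
  finally show ?thesis
    by simp
qed (use finite_UNIV_card_ge_0[where ?'a = 'a] in auto)

locale ffq =
  fixes p m q :: nat and eps :: "'a::{field,finite}"
  assumes pr: "prime p" and odd: "odd p" and mpos: "m > 0" and qdef: "q = p ^ m"
    and card: "card (UNIV :: 'a set) = q ^ 2" and prim: "primitive_elem eps"
begin

lemma CHAR_eq: "CHAR('a) = p"
proof -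
  have "of_nat (p ^ (2*m)) = (0::'a)"
    using of_nat_card_UNIV_zero[where 'a='a] card qdef by (simp add: power_mult mult.commute)
  then have "(of_nat p :: 'a) ^ (2*m) = 0" by simp
  then have "of_nat p = (0::'a)" by simp
  then have "CHAR('a) dvd p" by (simp add: of_nat_eq_0_iff_char_dvd)
  moreover have "prime CHAR('a)"
    by (rule prime_CHAR_semidom) (rule finite_imp_CHAR_pos, simp)
  ultimately show ?thesis using pr by (simp add: primes_dvd_imp_eq)
qed

lemma primeC: "prime CHAR('a)" using CHAR_eq pr by simp

lemma frob_add: "((x::'a) + y) ^ (p ^ k) = x ^ (p ^ k) + y ^ (p ^ k)"
  by (rule freshmans_dream') (auto simp: CHAR_eq pr)

lemma frob_sum: "(sum (f::'b \<Rightarrow> 'a) S) ^ (p ^ k) = (\<Sum>i\<in>S. f i ^ (p ^ k))"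
  by (rule freshmans_dream_sum') (auto simp: CHAR_eq pr)

lemma frob_neg: "(- (x::'a)) ^ (p ^ k) = - (x ^ (p ^ k))"
proof -
  have "(x + - x) ^ (p ^ k) = x ^ (p ^ k) + (- x) ^ (p ^ k)" by (rule frob_add)
  moreover have "(0::'a) ^ (p ^ k) = 0" using pr by (simp add: prime_gt_0_nat)
  ultimately have "0 = x ^ (p ^ k) + (- x) ^ (p ^ k)" by simp
  then show ?thesis by (simp add: eq_neg_iff_add_eq_0 add.commute)
qed

lemma frob_diff: "((x::'a) - y) ^ (p ^ k) = x ^ (p ^ k) - y ^ (p ^ k)"
  using frob_add[of x "-y" k] frob_neg[of y k] by simp

lemma q_eq: "q = p ^ m" by (rule qdef)

lemma frobq_add: "((x::'a) + y) ^ q = x ^ q + y ^ q" using frob_add qdef by simp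
lemma frobq_diff: "((x::'a) - y) ^ q = x ^ q - y ^ q" using frob_diff qdef by simp
lemma frobq_neg: "(- (x::'a)) ^ q = - (x ^ q)" using frob_neg qdef by simp

lemma pow_qq: "(x::'a) ^ (q * q) = x"
proof -
  have "x ^ card (UNIV::'a set) = x" by (rule pow_card_same)
  moreover have "card (UNIV::'a set) = q * q" using card by (simp add: power2_eq_square)
  ultimately show ?thesis by simp
qed

lemma pow_q_q: "((x::'a) ^ q) ^ q = x"
  using pow_qq[of x] by (simp only: power_mult)

lemma two_ne0: "(2::'a) \<noteq> 0"
proof
  assume "(2::'a) = 0"
  then have "(of_nat 2::'a) = 0" by simp
  then have "p dvd 2" using CHAR_eq of_nat_eq_0_iff_char_dvd by metis
  then have "p \<le> 2" by (rule dvd_imp_le) simp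
  moreover have "p \<ge> 2" using pr by (simp add: prime_ge_2_nat)
  ultimately have "p = 2" by simp
  then show False using odd by simp
qed

lemma pown_const: "(of_nat n :: 'a) ^ (p ^ k) = of_nat n"
proof (induction n)
  case 0 then show ?case using pr by (simp add: prime_gt_0_nat)
next
  case (Suc n)
  have "(1 + of_nat n :: 'a) ^ (p ^ k) = 1 + of_nat n ^ (p^k)" by (simp add: frob_add)
  then show ?case using Suc by simp
qed

lemma two_q: "(2::'a) ^ q = 2" using pown_const[of 2 m] qdef by simp


lemma nonzero_pow_qq1: "(x::'a) \<noteq> 0 \<Longrightarrow> x ^ (q * q - 1) = 1"
proof -
  assume x: "x \<noteq> 0"
  have qq: "q * q > 0" using card finite_UNIV_card_ge_0[where 'a='a] by (simp add: power2_eq_square)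
  have "x ^ (q * q - 1) * x = x ^ (q * q)" using qq by (simp add: power_Suc2[symmetric] del: power_Suc2)
  also have "... = x" by (rule pow_qq)
  finally show ?thesis using x by simp
qed

lemma q_odd: "odd q" using odd qdef by simp
lemma q_ge3: "q \<ge> 3"
proof -
  have "p \<ge> 2" using pr by (simp add: prime_ge_2_nat)
  then have "p \<ge> 3" using odd by presburger
  moreover have "p ^ 1 \<le> p ^ m" by (rule power_increasing) (use mpos pr prime_gt_0_nat[of p] in auto)
  moreover note qdef
  ultimately show ?thesis by simp
qed


lemma eps_ne0: "eps \<noteq> 0" using prim by (simp add: primitive_elem_def)

lemma eps_all: "y \<noteq> 0 \<Longrightarrow> \<exists>k::nat. y = eps ^ k" using prim by (simp add: primitive_elem_def)

lemma eps_N1: "eps ^ (q * q - 1) = 1" using nonzero_pow_qq1 eps_ne0 by simp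

lemma eps_pow_mod: "eps ^ k = eps ^ (k mod (q * q - 1))"
proof -
  have "eps ^ k = eps ^ ((q*q-1) * (k div (q*q-1)) + k mod (q*q-1))" by simp
  also have "... = eps ^ (k mod (q*q-1))" by (simp only: power_add power_mult eps_N1) simp
  finally show ?thesis .
qed

lemma eps_order: assumes "eps ^ k = 1" shows "(q * q - 1) dvd k"
proof (rule ccontr)
  define N where "N = q * q - 1"
  define r where "r = k mod N"
  assume "\<not> (q * q - 1) dvd k"
  then have r0: "r > 0" unfolding r_def N_def by (simp add: dvd_eq_mod_eq_0)
  have "q * q \<ge> 3 * 3" using q_ge3 by (intro mult_le_mono)
  then have Npos: "N > 0" unfolding N_def by simp
  have rN: "r < N" unfolding r_def using Npos by simp
  have er: "eps ^ r = 1" using eps_pow_mod[of k] assms unfolding r_def N_def by simp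
  have per: "eps ^ n = eps ^ (n mod r)" for n
  proof -
    have "eps ^ n = eps ^ (r * (n div r) + n mod r)" by simp
    also have "... = eps ^ (n mod r)" by (simp only: power_add power_mult er) simp
    finally show ?thesis .
  qed
  have "UNIV - {0} \<subseteq> (\<lambda>n. eps ^ n) ` {..<r}"
  proof
    fix y :: 'a assume "y \<in> UNIV - {0}"
    then obtain k where "y = eps ^ k" using eps_all by auto
    then have "y = eps ^ (k mod r)" using per by simp
    moreover have "k mod r < r" using r0 by simp
    ultimately show "y \<in> (\<lambda>n. eps ^ n) ` {..<r}" by blast
  qed
  then have "card (UNIV - {0::'a}) \<le> card ((\<lambda>n. eps ^ n) ` {..<r})" by (intro card_mono) auto
  also have "... \<le> r" using card_image_le[of "{..<r}" "\<lambda>n. eps ^ n"] by simp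
  finally have "card (UNIV - {0::'a}) \<le> r" .
  moreover have "card (UNIV - {0::'a}) = card (UNIV::'a set) - 1" by (simp add: card_Diff_singleton)
  moreover have "card (UNIV::'a set) = q * q" using card by (simp add: power2_eq_square)
  ultimately have "N \<le> r" unfolding N_def by simp
  then show False using rN by simp
qed


lemma half_order: "eps ^ ((q * q - 1) div 2) = -1"
proof -
  define N where "N = q * q - 1"
  define h where "h = eps ^ (N div 2)"
  have evN: "even N" using q_odd unfolding N_def by simp
  have "q * q \<ge> 3 * 3" using q_ge3 by (intro mult_le_mono)
  then have Npos: "N > 0" unfolding N_def by simp
  have "h * h = eps ^ (N div 2 + N div 2)" unfolding h_def by (simp add: power_add)
  also have "N div 2 + N div 2 = N" using evN by (elim evenE) simp
  finally have hh: "h * h = 1" using eps_N1 unfolding N_def by simp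
  have "h \<noteq> 1"
  proof
    assume "h = 1"
    then have "N dvd N div 2" using eps_order unfolding h_def N_def by simp
    moreover have "N div 2 > 0" "N div 2 < N" using Npos evN by auto
    ultimately show False by (simp add: nat_dvd_not_less)
  qed
  moreover have "(h - 1) * (h + 1) = 0" using hh by (simp add: algebra_simps)
  ultimately have "h + 1 = 0" by simp
  then show ?thesis unfolding h_def N_def by (simp add: eq_neg_iff_add_eq_0)
qed

lemma theta_q: "(eps ^ ((q + 1) div 2)) ^ q = - (eps ^ ((q + 1) div 2))"
proof -
  obtain k where qk: "q = 2 * k + 1" using q_odd oddE by blast
  have e1: "(q + 1) div 2 * q = (q + 1) div 2 + (q * q - 1) div 2"
    unfolding qk by (simp add: algebra_simps)
  have "(eps ^ ((q + 1) div 2)) ^ q = eps ^ ((q + 1) div 2 * q)" by (simp add: power_mult)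
  also have "... = eps ^ ((q + 1) div 2) * eps ^ ((q * q - 1) div 2)" by (simp only: e1 power_add)
  finally show ?thesis using half_order by simp
qed

lemma e_q: assumes "odd (dd::int)"
  shows "(eps powi (int ((q + 1) div 2) * dd)) ^ q = - (eps powi (int ((q + 1) div 2) * dd))"
proof -
  define th where "th = eps ^ ((q + 1) div 2)"
  have "eps powi (int ((q + 1) div 2) * dd) = th powi dd"
    unfolding th_def by (simp add: power_int_mult)
  moreover have "(th powi dd) ^ q = (th ^ q) powi dd"
    by (simp add: power_int_power power_int_power' mult.commute)
  moreover have "th ^ q = - th" unfolding th_def by (rule theta_q)
  ultimately show ?thesis using assms by simp
qed


lemma pow_comm: "((x::'a) ^ a) ^ b = (x ^ b) ^ a"
  by (simp add: power_mult[symmetric] mult.commute)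

lemma pow_iter: "(x::'a) ^ a = x \<Longrightarrow> x ^ (a ^ k) = x"
  by (induction k) (simp_all add: power_mult pow_comm[of x _ a])

lemma p_ge3: "p \<ge> 3"
proof -
  have "p \<ge> 2" using pr by (simp add: prime_ge_2_nat)
  then show "p \<ge> 3" using odd by presburger
qed

lemma pow_p_mod: assumes "(x::'a) ^ q = x" shows "x ^ (p ^ a) = x ^ (p ^ (a mod m))"
proof -
  have "p ^ a = p ^ (a mod m) * q ^ (a div m)"
    unfolding qdef by (simp add: power_add[symmetric] power_mult[symmetric] mult.commute)
  then show ?thesis using pow_iter[OF assms] by (simp add: power_mult pow_comm[of x "p ^ (a mod m)"])
qed

lemma Fq_pow_q1: "(x::'a) ^ q = x \<Longrightarrow> x \<noteq> 0 \<Longrightarrow> x ^ (q - 1) = 1"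
proof -
  assume "x ^ q = x" "x \<noteq> 0"
  moreover have "x ^ q = x ^ (q - 1) * x" using q_ge3 by (simp add: power_Suc2[symmetric] del: power_Suc2)
  ultimately show ?thesis by simp
qed

end

lemma ring_id:
  fixes u s delta D1 D2 Dq b1 b2 b3 e1 e2 e3 :: "'a::comm_ring_1"
  shows "(b1 * e1 * ((u + D1) * (s + Dq)) + b2 * e2 * ((u + D1) * (s + delta)) + b3 * e3 * (u + D1)^2)
    + (b1 * (- e1) * ((u + D2) * (s + delta)) + b2 * (- e2) * ((u + D2) * (s + Dq)) + b3 * (- e3) * (u + D2)^2)
    = ((Dq - delta) * (b1 * e1 - b2 * e2) + 2 * b3 * e3 * (D1 - D2)) * u
      + (1 - (1 + (D2 - D1) * (b1 * e1 + b2 * e2))) * s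
      + ((D1 * Dq - D2 * delta) * b1 * e1 + (D1 * delta - D2 * Dq) * b2 * e2 + (D1^2 - D2^2) * b3 * e3)"
  by (simp add: algebra_simps power2_eq_square)

locale main = ffq p m q eps for p m q and eps :: "'a::{field,finite}" +
  fixes i j d t :: nat and d1 d2 d3 :: int and delta b1 b2 b3 :: 'a
    and P G :: "'a \<Rightarrow> 'a" and A B C e1 e2 e3 :: 'a
  assumes b1q: "b1 ^ q = b1" and b2q: "b2 ^ q = b2" and b3q: "b3 ^ q = b3"
    and od1: "odd d1" and od2: "odd d2" and od3: "odd d3"
    and tdef: "t = (q + 1) div 2"
    and i2m: "i < 2 * m" and jdef: "j = i mod m" and ddef: "d = gcd m j"
    and e1def: "e1 = eps powi (int t * d1)" and e2def: "e2 = eps powi (int t * d2)" and e3def: "e3 = eps powi (int t * d3)"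
    and Pdef: "P = (\<lambda>x. b1 * e1 * (x ^ q + x + delta) ^ (p ^ i + q)
                 + b2 * e2 * (x ^ q + x + delta) ^ (p ^ i + 1)
                 + b3 * e3 * (x ^ q + x + delta) ^ (2 * p ^ i) - x)"
    and Adef: "A = (delta ^ q - delta) * (b1 * e1 - b2 * e2) + 2 * b3 * e3 * (delta ^ (p ^ i) - delta ^ (p ^ i * q))"
    and Bdef: "B = 1 + (delta ^ (p ^ i * q) - delta ^ (p ^ i)) * (b1 * e1 + b2 * e2)"
    and Cdef: "C = (delta ^ (p ^ i + q) - delta ^ (p ^ i * q + 1)) * b1 * e1
           + (delta ^ (p ^ i + 1) - delta ^ (p ^ i * q + q)) * b2 * e2
           + (delta ^ (2 * p ^ i) - delta ^ (2 * p ^ i * q)) * b3 * e3"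
    and Gdef: "G = (\<lambda>y. b1 * e1 * y ^ (p ^ i + q) + b2 * e2 * y ^ (p ^ i + 1) + b3 * e3 * y ^ (2 * p ^ i))"
begin

lemma e1q: "e1 ^ q = - e1" using e_q[OF od1] e1def tdef by simp
lemma e2q: "e2 ^ q = - e2" using e_q[OF od2] e2def tdef by simp
lemma e3q: "e3 ^ q = - e3" using e_q[OF od3] e3def tdef by simp

lemma P_G: "P x = G (x ^ q + x + delta) - x" unfolding Pdef Gdef by simp

lemma TG:
  assumes sq: "s ^ q = s"
  shows "G (s + delta) ^ q + G (s + delta) = A * s ^ (p ^ i) + (1 - B) * s + C"
proof -
  define z where "z = s + delta"
  define u where "u = s ^ (p ^ i)"
  define D1 where "D1 = delta ^ (p ^ i)"
  define D2 where "D2 = delta ^ (p ^ i * q)"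
  define Dq where "Dq = delta ^ q"
  have uq: "u ^ q = u" unfolding u_def using sq by (simp add: pow_comm[of s "p^i" q])
  have D2q: "D2 = D1 ^ q" unfolding D2_def D1_def by (simp add: power_mult)
  have zpi: "z ^ (p ^ i) = u + D1" unfolding z_def u_def D1_def by (rule frob_add)
  have zq: "z ^ q = s + Dq" unfolding z_def Dq_def using sq by (simp add: frobq_add)
  have zpiq: "(u + D1) ^ q = u + D2" using uq D2q by (simp add: frobq_add)
  have zqq: "(s + Dq) ^ q = z" unfolding Dq_def z_def using sq by (simp add: frobq_add pow_q_q)
  have h1: "z ^ (p ^ i + q) = (u + D1) * (s + Dq)" by (simp add: power_add zpi zq)
  have h2: "z ^ (p ^ i + 1) = (u + D1) * z" by (simp add: power_add zpi)
  have h3: "z ^ (2 * p ^ i) = (u + D1) ^ 2"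
    by (simp add: power_mult[symmetric] mult.commute[of 2] zpi[symmetric])
  have Gz: "G z = b1 * e1 * ((u + D1) * (s + Dq)) + b2 * e2 * ((u + D1) * (s + delta)) + b3 * e3 * (u + D1)^2"
    unfolding Gdef using h1 h2 h3 z_def by simp
  have Gzq: "(G z) ^ q = b1 * (- e1) * ((u + D2) * (s + delta)) + b2 * (- e2) * ((u + D2) * (s + Dq)) + b3 * (- e3) * (u + D2)^2"
  proof -
    have "(G z) ^ q = (b1 * e1 * ((u + D1) * (s + Dq))) ^ q + (b2 * e2 * ((u + D1) * (s + delta))) ^ q + (b3 * e3 * (u + D1)^2) ^ q"
      unfolding Gz by (simp add: frobq_add)
    also have "... = b1 * (- e1) * ((u + D2) * (s + delta)) + b2 * (- e2) * ((u + D2) * (s + Dq)) + b3 * (- e3) * (u + D2)^2"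
      by (simp only: power_mult_distrib b1q b2q b3q e1q e2q e3q zpiq zqq pow_comm[of _ 2 q])
         (simp add: z_def zq[unfolded z_def])
    finally show ?thesis .
  qed
  have Aeq: "A = (Dq - delta) * (b1 * e1 - b2 * e2) + 2 * b3 * e3 * (D1 - D2)"
    unfolding Adef Dq_def D1_def D2_def by simp
  have Beq: "B = 1 + (D2 - D1) * (b1 * e1 + b2 * e2)"
    unfolding Bdef D1_def D2_def by simp
  have Ceq: "C = (D1 * Dq - D2 * delta) * b1 * e1 + (D1 * delta - D2 * Dq) * b2 * e2 + (D1^2 - D2^2) * b3 * e3"
    unfolding Cdef D1_def D2_def Dq_def
    by (simp add: power_add power_mult[symmetric] mult.commute[of 2] mult.assoc) (simp add: algebra_simps)
  have "G (s + delta) ^ q + G (s + delta) = (b1 * e1 * ((u + D1) * (s + Dq)) + b2 * e2 * ((u + D1) * (s + delta)) + b3 * e3 * (u + D1)^2)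
    + (b1 * (- e1) * ((u + D2) * (s + delta)) + b2 * (- e2) * ((u + D2) * (s + Dq)) + b3 * (- e3) * (u + D2)^2)"
    using Gz Gzq unfolding z_def by (simp only: add.commute)
  also have "... = ((Dq - delta) * (b1 * e1 - b2 * e2) + 2 * b3 * e3 * (D1 - D2)) * u
      + (1 - (1 + (D2 - D1) * (b1 * e1 + b2 * e2))) * s
      + ((D1 * Dq - D2 * delta) * b1 * e1 + (D1 * delta - D2 * Dq) * b2 * e2 + (D1^2 - D2^2) * b3 * e3)"
    by (rule ring_id)
  finally show ?thesis unfolding Aeq Beq Ceq u_def by (simp only: mult.commute)
qed


lemma T_Fq: "((x::'a) ^ q + x) ^ q = x ^ q + x"
  by (simp add: frobq_add pow_q_q add.commute)

lemma TP: "(P x) ^ q + P x = A * (x ^ q + x) ^ (p ^ i) - B * (x ^ q + x) + C"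
proof -
  define s where "s = x ^ q + x"
  have sq: "s ^ q = s" unfolding s_def by (rule T_Fq)
  have "(P x) ^ q + P x = (G (s + delta) ^ q + G (s + delta)) - s"
    unfolding P_G s_def by (simp add: frobq_diff pow_q_q algebra_simps)
  also have "... = A * s ^ (p ^ i) - B * s + C" using TG[OF sq] by (simp add: algebra_simps)
  finally show ?thesis unfolding s_def .
qed

lemma inv_lemma:
  assumes Rq: "R ^ q = R" and eq: "A * R ^ (p ^ i) - B * R + C = c ^ q + c"
  shows "P (G (R + delta) - c) = c"
proof -
  define y where "y = G (R + delta) - c"
  have "y ^ q + y = (G (R + delta) ^ q + G (R + delta)) - (c ^ q + c)"
    unfolding y_def by (simp add: frobq_diff algebra_simps)
  also have "... = (A * R ^ (p ^ i) + (1 - B) * R + C) - (A * R ^ (p ^ i) - B * R + C)"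
    by (simp only: TG[OF Rq] eq)
  also have "... = R" by (simp add: algebra_simps)
  finally have Ty: "y ^ q + y = R" .
  show ?thesis unfolding y_def[symmetric] P_G Ty using y_def by simp
qed

lemma right_inv_bij:
  assumes "\<And>c. P (Q c) = c"
  shows "bij P \<and> (\<forall>c. P (Q c) = c \<and> Q (P c) = c)"
proof -
  have s: "surj P" using assms by (metis surjI)
  then have inj: "inj P" by (rule finite_UNIV_surj_inj[rotated]) simp
  have "Q (P c) = c" for c using assms[of "P c"] inj by (meson injD)
  then show ?thesis using s inj assms by (simp add: bij_def)
qed

lemma noninj:
  assumes s0: "s0 \<noteq> 0" and s0q: "s0 ^ q = s0" and ker: "A * s0 ^ (p ^ i) = B * s0"
  shows "\<not> inj P"
proof
  assume inj: "inj P"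
  define x where "x = s0 / 2"
  have xq: "x ^ q = x" unfolding x_def by (simp add: power_divide s0q two_q)
  have Tx: "x ^ q + x = s0" using xq two_ne0 unfolding x_def by (simp add: field_simps)
  define x' where "x' = x - G (s0 + delta) + G (0 + delta)"
  have "x' ^ q + x' = (x ^ q + x) - (G (s0 + delta) ^ q + G (s0 + delta)) + (G (0 + delta) ^ q + G (0 + delta))"
    unfolding x'_def by (simp add: frobq_diff frobq_add algebra_simps)
  also have "... = s0 - (A * s0 ^ (p ^ i) + (1 - B) * s0 + C) + (A * 0 ^ (p ^ i) + (1 - B) * 0 + C)"
    using TG[OF s0q] TG[of 0] Tx q_ge3 by simp
  also have "... = 0" using ker pr by (simp add: algebra_simps prime_gt_0_nat)
  finally have Tx': "x' ^ q + x' = 0" .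
  have "P x' = G (0 + delta) - x'" unfolding P_G Tx' by simp
  also have "... = P x" unfolding P_G Tx x'_def by simp
  finally have "P x' = P x" .
  then have "x' = x" using inj by (meson injD)
  then show False using Tx Tx' s0 by simp
qed


lemma pow_qk: "(x::'a) ^ q = x \<Longrightarrow> x ^ (q ^ k) = x"
  by (induction k) (simp_all add: power_mult pow_comm[of x _ q])

lemma pow_pi_pj: assumes "(x::'a) ^ q = x" shows "x ^ (p ^ i) = x ^ (p ^ j)"
proof -
  have "p ^ i = p ^ j * q ^ (i div m)"
    unfolding jdef qdef by (simp add: power_add[symmetric] power_mult[symmetric] mult.commute)
  then show ?thesis using pow_qk[OF assms] by (simp add: power_mult pow_comm[of x "p^j"])
qed

lemma Ceq': "C = (delta ^ (p ^ i) * delta ^ q - delta ^ (p ^ i * q) * delta) * b1 * e1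
   + (delta ^ (p ^ i) * delta - delta ^ (p ^ i * q) * delta ^ q) * b2 * e2
   + ((delta ^ (p ^ i))^2 - (delta ^ (p ^ i * q))^2) * b3 * e3"
  unfolding Cdef
  by (simp add: power_add power_mult[symmetric] mult.commute[of 2] mult.assoc) (simp add: algebra_simps)

lemma D1q: "(delta ^ (p ^ i)) ^ q = delta ^ (p ^ i * q)" by (simp add: power_mult)
lemma D2q: "(delta ^ (p ^ i * q)) ^ q = delta ^ (p ^ i)"
  by (simp only: power_mult pow_q_q)
  
lemma Aq: "A ^ q = A"
  unfolding Adef
  by (simp add: frobq_add frobq_diff power_mult_distrib b1q b2q b3q e1q e2q e3q D1q D2q pow_q_q two_q)
     (simp add: algebra_simps)

lemma Bq: "B ^ q = B"
  unfolding Bdef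
  by (simp add: frobq_add frobq_diff power_mult_distrib b1q b2q b3q e1q e2q e3q D1q D2q pow_q_q two_q)
     (simp add: algebra_simps)

lemma Cq: "C ^ q = C"
  unfolding Ceq'
  by (simp add: frobq_add frobq_diff power_mult_distrib b1q b2q b3q e1q e2q e3q D1q D2q pow_q_q two_q
      pow_comm[of _ 2 q])
     (simp add: algebra_simps)


lemma case1:
  "i \<in> {0, m} \<longrightarrow>
        (bij P \<longleftrightarrow> A - B \<noteq> 0) \<and>
        (A - B \<noteq> 0 \<longrightarrow>
          (let Q = (\<lambda>x. G (inverse (A - B) * (x ^ q + x) - inverse (A - B) * C + delta) - x)
           in \<forall>c. P (Q c) = c \<and> Q (P c) = c))"
proof
  assume i0m: "i \<in> {0, m}"
  have spi: "s ^ (p ^ i) = s" if "s ^ q = s" for s :: 'a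
    using i0m that qdef by auto
  have inv: "bij P \<and> (let Q = (\<lambda>x. G (inverse (A - B) * (x ^ q + x) - inverse (A - B) * C + delta) - x)
           in \<forall>c. P (Q c) = c \<and> Q (P c) = c)" if AB: "A - B \<noteq> 0"
  proof -
    define Q where "Q = (\<lambda>x. G (inverse (A - B) * (x ^ q + x) - inverse (A - B) * C + delta) - x)"
    have "P (Q c) = c" for c
    proof -
      define R where "R = inverse (A - B) * (c ^ q + c) - inverse (A - B) * C"
      have Rq: "R ^ q = R" unfolding R_def
        by (simp add: frobq_diff power_mult_distrib power_inverse Aq Bq Cq T_Fq)
      have "A * R ^ (p ^ i) - B * R + C = (A - B) * R + C" using spi[OF Rq] by (simp add: algebra_simps)
      also have "(A - B) * R = ((A - B) * inverse (A - B)) * (c ^ q + c) - ((A - B) * inverse (A - B)) * C"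
        unfolding R_def by (simp add: right_diff_distrib mult.assoc)
      also have "... = c ^ q + c - C" using AB by simp
      finally have "A * R ^ (p ^ i) - B * R + C = c ^ q + c" by simp
      then have "P (G (R + delta) - c) = c" by (rule inv_lemma[OF Rq])
      then show ?thesis unfolding Q_def R_def .
    qed
    then show ?thesis using right_inv_bij[of Q] unfolding Q_def Let_def by blast
  qed
  have "A - B = 0 \<Longrightarrow> \<not> inj P"
    by (rule noninj[of 1]) (simp_all add: algebra_simps)
  then show "(bij P \<longleftrightarrow> A - B \<noteq> 0) \<and>
        (A - B \<noteq> 0 \<longrightarrow>
          (let Q = (\<lambda>x. G (inverse (A - B) * (x ^ q + x) - inverse (A - B) * C + delta) - x)
           in \<forall>c. P (Q c) = c \<and> Q (P c) = c))"
    using inv bij_is_inj by blast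
qed

lemma case2:
  "i \<notin> {0, m} \<and> A = 0 \<and> B \<noteq> 0 \<longrightarrow>
        bij P \<and>
        (let Q = (\<lambda>x. G (- inverse B * (x ^ q + x) + inverse B * C + delta) - x)
         in \<forall>c. P (Q c) = c \<and> Q (P c) = c)"
proof
  assume h: "i \<notin> {0, m} \<and> A = 0 \<and> B \<noteq> 0"
  define Q where "Q = (\<lambda>x. G (- inverse B * (x ^ q + x) + inverse B * C + delta) - x)"
  have "P (Q c) = c" for c
  proof -
    define R where "R = - inverse B * (c ^ q + c) + inverse B * C"
    have Rq: "R ^ q = R" unfolding R_def
      by (simp add: frobq_add frobq_diff frobq_neg power_mult_distrib power_inverse Bq Cq T_Fq pow_q_q)
    have "A * R ^ (p ^ i) - B * R + C = c ^ q + c" unfolding R_def using h by (simp add: field_simps)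
    then have "P (G (R + delta) - c) = c" by (rule inv_lemma[OF Rq])
    then show ?thesis unfolding Q_def R_def .
  qed
  then show "bij P \<and> (let Q = (\<lambda>x. G (- inverse B * (x ^ q + x) + inverse B * C + delta) - x)
         in \<forall>c. P (Q c) = c \<and> Q (P c) = c)"
    using right_inv_bij[of Q] unfolding Q_def Let_def by blast
qed

lemma j_ne0: "i \<notin> {0, m} \<Longrightarrow> j \<noteq> 0"
proof
  assume "i \<notin> {0, m}" "j = 0"
  then have "m dvd i" unfolding jdef by auto
  then obtain k where "i = m * k" by blast
  then show False using \<open>i \<notin> {0, m}\<close> i2m mpos
    by (cases k; cases "k - 1") auto
qed

lemma case3:
  "i \<notin> {0, m} \<and> A \<noteq> 0 \<and> B = 0 \<longrightarrow>
        bij P \<and>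
        (let Q = (\<lambda>x. G (inverse A ^ (p ^ (m - j)) * (x ^ q + x) ^ (p ^ (m - j))
                          - (C / A) ^ (p ^ (m - j)) + delta) - x)
         in \<forall>c. P (Q c) = c \<and> Q (P c) = c)"
proof
  assume h: "i \<notin> {0, m} \<and> A \<noteq> 0 \<and> B = 0"
  have jm: "j < m" unfolding jdef using mpos by simp
  define Q where "Q = (\<lambda>x. G (inverse A ^ (p ^ (m - j)) * (x ^ q + x) ^ (p ^ (m - j))
                          - (C / A) ^ (p ^ (m - j)) + delta) - x)"
  have "P (Q c) = c" for c
  proof -
    define w where "w = (c ^ q + c - C) / A"
    define R where "R = inverse A ^ (p ^ (m - j)) * (c ^ q + c) ^ (p ^ (m - j)) - (C / A) ^ (p ^ (m - j))"
    have wq: "w ^ q = w" unfolding w_def by (simp add: frobq_diff power_divide Aq Cq T_Fq)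
    have Rw: "R = w ^ (p ^ (m - j))" unfolding R_def w_def
      by (simp add: diff_divide_distrib frob_diff power_divide field_simps)
    have Rq: "R ^ q = R" unfolding Rw using wq by (simp add: pow_comm[of w _ q])
    have "R ^ (p ^ i) = R ^ (p ^ j)" by (rule pow_pi_pj[OF Rq])
    also have "... = w ^ (p ^ (m - j) * p ^ j)" unfolding Rw by (simp add: power_mult)
    also have "p ^ (m - j) * p ^ j = q" unfolding qdef using jm by (simp add: power_add[symmetric])
    finally have "R ^ (p ^ i) = w" using wq by simp
    then have "A * R ^ (p ^ i) - B * R + C = c ^ q + c" unfolding w_def using h by (simp add: field_simps)
    then have "P (G (R + delta) - c) = c" by (rule inv_lemma[OF Rq])
    then show ?thesis unfolding Q_def R_def .
  qed
  then show "bij P \<and> (let Q = (\<lambda>x. G (inverse A ^ (p ^ (m - j)) * (x ^ q + x) ^ (p ^ (m - j))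
                          - (C / A) ^ (p ^ (m - j)) + delta) - x)
         in \<forall>c. P (Q c) = c \<and> Q (P c) = c)"
    using right_inv_bij[of Q] unfolding Q_def Let_def by blast
qed


end

locale main4 = main +
  assumes hi: "i \<notin> {0, m}"
begin

lemma j_pos: "0 < j" using j_ne0[OF hi] by simp
lemma j_lt: "j < m" unfolding jdef using mpos by simp
lemma d_pos: "0 < d" unfolding ddef using mpos by simp
lemma d_dvd_m: "d dvd m" unfolding ddef by simp
lemma d_dvd_j: "d dvd j" unfolding ddef by simp
lemma m_eq: "m = d * (m div d)" using d_dvd_m by simp
lemma j_eq: "j = d * (j div d)" using d_dvd_j by simp
lemma n_pos: "0 < m div d" using mpos d_pos d_dvd_m by (metis m_eq gr0I mult_0_right)
lemma cop: "coprime (j div d) (m div d)"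
  using div_gcd_coprime[of m j] mpos unfolding ddef by (simp add: coprime_commute)

lemma MN: assumes bq: "(b::'a) ^ q = b"
  shows "b ^ (\<Sum>l<m div d. (p ^ j) ^ l) = b ^ (\<Sum>l<m div d. (p ^ d) ^ l)"
proof -
  define n where "n = m div d"
  define r where "r = j div d"
  define f where "f = (\<lambda>k. b ^ ((p ^ d) ^ k))"
  define h where "h = (\<lambda>l. (r * l) mod n)"
  have npos: "n > 0" using n_pos n_def by simp
  have cop': "coprime r n" using cop unfolding r_def n_def .
  have "b ^ (\<Sum>l<n. (p ^ j) ^ l) = (\<Prod>l<n. b ^ ((p ^ j) ^ l))" by (rule power_sum)
  also have "... = (\<Prod>l<n. f (h l))"
  proof (rule prod.cong[OF refl])
    fix l assume "l \<in> {..<n}"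
    have "b ^ ((p ^ j) ^ l) = b ^ (p ^ (j * l))" by (simp add: power_mult)
    also have "... = b ^ (p ^ ((j * l) mod m))" by (rule pow_p_mod[OF bq])
    also have "(j * l) mod m = d * h l"
      unfolding h_def n_def r_def
      by (subst m_eq, subst j_eq) (simp add: mod_mult_mult1 mult.assoc)
    also have "b ^ (p ^ (d * h l)) = f (h l)" unfolding f_def by (simp add: power_mult)
    finally show "b ^ ((p ^ j) ^ l) = f (h l)" .
  qed
  also have "... = (\<Prod>l<n. f l)"
  proof (rule prod.reindex_bij_betw)
    have inj: "inj_on h {..<n}"
    proof (rule inj_onI)
      fix x y assume x: "x \<in> {..<n}" and y: "y \<in> {..<n}" and e: "h x = h y"
      then have "[x * r = y * r] (mod n)" unfolding h_def cong_def by (simp add: mult.commute)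
      then have "[x = y] (mod n)" using cong_mult_rcancel_nat[OF cop'] by blast
      then show "x = y" using x y unfolding cong_def by simp
    qed
    moreover have "h ` {..<n} = {..<n}"
      by (rule endo_inj_surj) (use inj npos in \<open>auto simp: h_def\<close>)
    ultimately show "bij_betw h {..<n} {..<n}" by (rule bij_betw_imageI)
  qed
  also have "... = b ^ (\<Sum>l<n. (p ^ d) ^ l)" unfolding f_def by (rule power_sum[symmetric])
  finally show ?thesis unfolding n_def .
qed


lemma K_eq: "(p ^ m - 1) div (p ^ d - 1) = (\<Sum>l<m div d. (p ^ d) ^ l)"
proof -
  have "p ^ d \<ge> 2" using p_ge3 d_pos by (metis le_trans numeral_le_iff one_le_numeral power_increasing power_one_right semiring_norm(68) Suc_leI less_imp_le_nat numeral_3_eq_3 One_nat_def Suc_1 le_Suc_eq)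
  moreover have "p ^ m = (p ^ d) ^ (m div d)" by (subst m_eq) (simp add: power_mult)
  ultimately show ?thesis using geom_div by simp
qed

lemma pj_ge2: "p ^ j \<ge> 2"
proof -
  have "p ^ 1 \<le> p ^ j" by (rule power_increasing) (use j_pos p_ge3 in auto)
  then show ?thesis using p_ge3 by simp
qed

lemma E_eq: "(p ^ ((k + 1) * j) - 1) div (p ^ j - 1) = (\<Sum>l<Suc k. (p ^ j) ^ l)"
proof -
  have "p ^ ((k + 1) * j) = (p ^ j) ^ (k + 1)" by (simp only: power_mult[symmetric] mult.commute[of "k+1" j])
  then show ?thesis by (simp only: geom_div[OF pj_ge2] Suc_eq_plus1)
qed

lemma geo_rec: "(\<Sum>l<Suc n. (x::nat) ^ l) = 1 + x * (\<Sum>l<n. x ^ l)"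
  by (subst sum.lessThan_Suc_shift) (simp add: sum_distrib_left)

lemma qr: "p ^ (j * (m div d)) = q ^ (j div d)"
proof -
  have "j * (m div d) = m * (j div d)" by (subst (1 2) j_eq, subst (2) m_eq) (simp add: algebra_simps)
  then show ?thesis unfolding qdef by (simp add: power_mult)
qed

lemma case4_inv:
  assumes AB: "A * B \<noteq> 0" and N1: "normF p m d (B / A) \<noteq> 1"
  shows "bij P \<and> (let N = normF p m d (B / A);
               Q = (\<lambda>x. G (delta + N / (1 - N) *
                      (\<Sum>k<m div d. (A / B) ^ ((p ^ ((k + 1) * j) - 1) div (p ^ j - 1))
                                     * ((x ^ q + x) / A - C / A) ^ (p ^ (k * j)))) - x)
           in \<forall>c. P (Q c) = c \<and> Q (P c) = c)"
proof -
  define n where "n = m div d"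
  define N where "N = normF p m d (B / A)"
  define \<beta> where "\<beta> = B / A"
  define \<alpha> where "\<alpha> = A / B"
  define c0 where "c0 = N / (1 - N)"
  define E where "E = (\<lambda>k. (\<Sum>l<Suc k. (p ^ j) ^ l))"
  define \<gamma> where "\<gamma> = (\<lambda>k. \<alpha> ^ E k)"
  have A0: "A \<noteq> 0" and B0: "B \<noteq> 0" using AB by auto
  have bq: "\<beta> ^ q = \<beta>" unfolding \<beta>_def by (simp add: power_divide Aq Bq)
  have aq: "\<alpha> ^ q = \<alpha>" unfolding \<alpha>_def by (simp add: power_divide Aq Bq)
  have b0: "\<beta> \<noteq> 0" unfolding \<beta>_def using A0 B0 by simp
  have ab: "\<alpha> * \<beta> = 1" unfolding \<alpha>_def \<beta>_def using A0 B0 by simp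
  have ainv: "\<alpha> = inverse \<beta>" unfolding \<alpha>_def \<beta>_def by simp
  have Ndef: "N = \<beta> ^ (\<Sum>l<n. (p ^ d) ^ l)" unfolding N_def normF_def \<beta>_def n_def K_eq ..
  have NM: "N = \<beta> ^ (\<Sum>l<n. (p ^ j) ^ l)" unfolding Ndef n_def by (rule MN[OF bq, symmetric])
  have N0: "N \<noteq> 0" unfolding Ndef using b0 by simp
  have N1': "N \<noteq> 1" using N1 unfolding N_def .
  have Nq: "N ^ q = N" unfolding Ndef using bq by (simp add: pow_comm[of \<beta> _ q])
  have Npd: "N ^ (p ^ d) = N"
  proof -
    have "N ^ (p ^ d - 1) = \<beta> ^ ((\<Sum>l<n. (p ^ d) ^ l) * (p ^ d - 1))" unfolding Ndef by (simp add: power_mult)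
    also have "(\<Sum>l<n. (p ^ d) ^ l) * (p ^ d - 1) = q - 1"
      unfolding n_def K_eq[symmetric] qdef
    proof -
      have "p ^ d \<ge> 1" using p_ge3 by simp
      have "(p ^ d - 1) dvd (p ^ m - 1)"
        using pow_minus_one_dvd[of p d "m div d"] p_ge3 m_eq by simp
      then show "(p ^ m - 1) div (p ^ d - 1) * (p ^ d - 1) = p ^ m - 1" by simp
    qed
    also have "\<beta> ^ (q - 1) = 1" by (rule Fq_pow_q1[OF bq b0])
    finally have "N ^ (p ^ d - 1) = 1" .
    moreover have "N ^ (p ^ d) = N ^ (p ^ d - 1) * N" using p_ge3
      by (simp add: power_Suc2[symmetric] del: power_Suc2)
    ultimately show ?thesis by simp
  qed
  have Npj: "N ^ (p ^ j) = N"
  proof -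
    have "p ^ j = (p ^ d) ^ (j div d)" by (subst j_eq) (simp add: power_mult)
    then show ?thesis using pow_iter[OF Npd] by simp
  qed
  have c0pj: "c0 ^ (p ^ j) = c0" unfolding c0_def by (simp add: power_divide frob_diff Npj)
  have c0q: "c0 ^ q = c0" unfolding c0_def by (simp add: power_divide frobq_diff Nq)
  have c0N: "c0 * (inverse N - 1) = 1" unfolding c0_def using N0 N1' by (simp add: field_simps)
  have g0: "\<gamma> 0 = \<alpha>" unfolding \<gamma>_def E_def by simp
  have gsuc: "\<gamma> k ^ (p ^ j) = \<beta> * \<gamma> (Suc k)" for k
  proof -
    have e: "E (Suc k) = 1 + E k * p ^ j" unfolding E_def geo_rec by (simp add: algebra_simps)
    have "\<gamma> (Suc k) = \<alpha> * \<gamma> k ^ (p ^ j)" unfolding \<gamma>_def e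
      by (simp only: power_add power_mult power_one_right)
    then show ?thesis using ab by (simp add: algebra_simps)
  qed
  have gn: "\<gamma> n = inverse N * \<alpha>"
  proof -
    have "\<gamma> n = \<alpha> ^ (\<Sum>l<n. (p ^ j) ^ l) * \<alpha> ^ ((p ^ j) ^ n)" unfolding \<gamma>_def E_def
      by (simp add: power_add)
    also have "\<alpha> ^ (\<Sum>l<n. (p ^ j) ^ l) = inverse N" unfolding NM ainv by (simp add: power_inverse)
    also have "(p ^ j) ^ n = q ^ (j div d)" unfolding n_def qr[symmetric] by (simp add: power_mult)
    also have "\<alpha> ^ (q ^ (j div d)) = \<alpha>" by (rule pow_iter[OF aq])
    finally show ?thesis .
  qed
  have gq: "\<gamma> k ^ q = \<gamma> k" for k unfolding \<gamma>_def using aq by (simp add: pow_comm[of \<alpha> _ q])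
  define Q where "Q = (\<lambda>x. G (delta + N / (1 - N) *
                      (\<Sum>k<m div d. (A / B) ^ ((p ^ ((k + 1) * j) - 1) div (p ^ j - 1))
                                     * ((x ^ q + x) / A - C / A) ^ (p ^ (k * j)))) - x)"
  have "P (Q c) = c" for c
  proof -
    define w where "w = (c ^ q + c) / A - C / A"
    define hh where "hh = (\<lambda>k. \<gamma> k * w ^ (p ^ (k * j)))"
    define S where "S = (\<Sum>k<n. hh k)"
    define R where "R = c0 * S"
    have wq: "w ^ q = w" unfolding w_def by (simp add: frobq_diff power_divide Aq Cq T_Fq)
    have Qc: "Q c = G (R + delta) - c"
      unfolding Q_def E_eq R_def S_def hh_def \<gamma>_def E_def c0_def w_def \<alpha>_def n_def
      by (simp add: add.commute)
    have hq: "hh k ^ q = hh k" for k unfolding hh_def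
      using wq gq by (simp add: power_mult_distrib pow_comm[of w _ q])
    have Sq: "S ^ q = S" unfolding S_def qdef by (simp add: frob_sum hq[unfolded qdef])
    have Rq: "R ^ q = R" unfolding R_def by (simp add: power_mult_distrib Sq c0q)
    have "S ^ (p ^ j) = (\<Sum>k<n. hh k ^ (p ^ j))" unfolding S_def by (rule frob_sum)
    also have "... = (\<Sum>k<n. \<beta> * hh (Suc k))"
    proof (rule sum.cong[OF refl])
      fix k
      have "(w ^ (p ^ (k * j))) ^ (p ^ j) = w ^ (p ^ (Suc k * j))"
        by (simp add: power_mult[symmetric] power_add[symmetric] algebra_simps)
      then show "hh k ^ (p ^ j) = \<beta> * hh (Suc k)" unfolding hh_def
        by (simp add: power_mult_distrib gsuc mult.assoc)
    qed
    also have "... = \<beta> * ((\<Sum>k<Suc n. hh k) - hh 0)"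
      unfolding sum.lessThan_Suc_shift by (simp add: sum_distrib_left)
    also have "... = \<beta> * (S + hh n - hh 0)" unfolding S_def by simp
    also have "hh 0 = \<alpha> * w" unfolding hh_def g0 by simp
    also have "hh n = inverse N * \<alpha> * w" unfolding hh_def gn
    proof -
      have "w ^ (p ^ (n * j)) = w" unfolding n_def using qr pow_iter[OF wq] by (simp add: mult.commute)
      then show "inverse N * \<alpha> * w ^ (p ^ (n * j)) = inverse N * \<alpha> * w" by simp
    qed
    finally have Spj0: "S ^ (p ^ j) = \<beta> * (S + inverse N * \<alpha> * w - \<alpha> * w)" .
    have ab': "\<alpha> * (\<beta> * x) = x" for x using ab by (simp add: mult.assoc[symmetric])
    have Spj: "S ^ (p ^ j) = \<beta> * S + (inverse N - 1) * w" unfolding Spj0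
      by (simp add: algebra_simps ab')
    have "R ^ (p ^ j) = \<beta> * R + c0 * (inverse N - 1) * w"
      unfolding R_def by (simp add: power_mult_distrib c0pj Spj algebra_simps)
    then have Rpj: "R ^ (p ^ j) = \<beta> * R + w" using c0N by simp
    have "A * R ^ (p ^ i) - B * R + C = A * R ^ (p ^ j) - B * R + C" using pow_pi_pj[OF Rq] by simp
    also have "... = A * w + C" unfolding Rpj using A0 unfolding \<beta>_def by (simp add: algebra_simps)
    also have "... = c ^ q + c" unfolding w_def using A0 by (simp add: field_simps)
    finally have "P (G (R + delta) - c) = c" by (rule inv_lemma[OF Rq])
    then show ?thesis unfolding Qc .
  qed
  then show ?thesis using right_inv_bij[of Q] unfolding Q_def Let_def N_def by blast
qed


lemma exists_root:
  assumes bq: "(b::'a) ^ q = b" and b0: "b \<noteq> 0" and bK: "b ^ ((p ^ m - 1) div (p ^ d - 1)) = 1"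
  shows "\<exists>s. s \<noteq> 0 \<and> s ^ q = s \<and> s ^ (p ^ j) = b * s"
proof -
  define K where "K = (p ^ m - 1) div (p ^ d - 1)"
  have p1: "p \<ge> 1" using p_ge3 by simp
  have dvdK: "(p ^ d - 1) dvd (p ^ m - 1)"
    using pow_minus_one_dvd[of p d "m div d"] p1 m_eq by simp
  have hK: "q - 1 = (p ^ d - 1) * K" unfolding K_def qdef using dvdK by simp
  have q1pos: "q - 1 > 0" using q_ge3 by simp
  have Kpos: "K > 0" using hK q1pos by (metis mult_0_right gr0I)
  have pd1: "p ^ d - 1 > 0" using hK q1pos by (metis mult_is_0 gr0I)
  obtain a where a: "b = eps ^ a" using eps_all[OF b0] by blast
  have qq: "q * q - 1 = (q + 1) * (q - 1)" using q_ge3 by (simp add: algebra_simps diff_mult_distrib2)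
  have "eps ^ (a * (q - 1)) = 1" using Fq_pow_q1[OF bq b0] a by (simp add: power_mult)
  then have "(q + 1) * (q - 1) dvd a * (q - 1)" using eps_order qq by metis
  moreover have "q - 1 \<noteq> 0" using q1pos by simp
  ultimately have "(q + 1) dvd a" using dvd_times_right_cancel_iff by blast
  then obtain a' where a': "a = (q + 1) * a'" by blast
  have "eps ^ ((q + 1) * (a' * K)) = (eps ^ a) ^ K" unfolding a' by (simp only: power_mult mult.assoc)
  also have "... = 1" using bK a unfolding K_def by simp
  finally have "eps ^ ((q + 1) * (a' * K)) = 1" .
  then have d1: "(q + 1) * (q - 1) dvd (q + 1) * (a' * K)" using eps_order qq by metis
  have qp: "q + 1 \<noteq> 0" by simp
  have "(q - 1) dvd a' * K" using d1 unfolding dvd_times_left_cancel_iff[OF qp] .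
  then have "(p ^ d - 1) * K dvd a' * K" unfolding hK .
  then have "(p ^ d - 1) dvd a'" using Kpos by simp
  then obtain c where c: "a' = (p ^ d - 1) * c" by blast
  have gcdj: "gcd (p ^ j - 1) (p ^ m - 1) = p ^ d - 1"
    using gcd_pow_minus_one[OF p1, of j m] unfolding ddef by (simp add: gcd.commute)
  obtain u v :: int where uv: "u * int (p ^ j - 1) + v * int (p ^ m - 1) = int (p ^ d - 1)"
    using bezout_int[of "int (p ^ j - 1)" "int (p ^ m - 1)"] gcdj by auto
  define g where "g = eps ^ (q + 1)"
  have g0: "g \<noteq> 0" unfolding g_def using eps_ne0 by simp
  have gq1: "g ^ (q - 1) = 1"
  proof -
    have "g ^ (q - 1) = eps ^ ((q + 1) * (q - 1))" unfolding g_def by (simp only: power_mult)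
    also have "... = 1" using eps_N1 qq by (simp only:)
    finally show ?thesis .
  qed
  have gq: "g ^ q = g"
  proof -
    have "g ^ q = g ^ (q - 1) * g" using q_ge3 by (simp add: power_Suc2[symmetric] del: power_Suc2)
    then show ?thesis using gq1 by simp
  qed
  define x where "x = int c * u"
  define s where "s = g powi x"
  have s0: "s \<noteq> 0" unfolding s_def using g0 by (simp add: power_int_not_zero)
  have sq: "s ^ q = s"
  proof -
    have "s ^ q = g powi (x * int q)" unfolding s_def by (rule power_int_power')
    also have "... = (g ^ q) powi x" by (simp add: power_int_power mult.commute)
    finally show ?thesis using gq unfolding s_def by simp
  qed
  have "s ^ (p ^ j - 1) = g powi (x * int (p ^ j - 1))" unfolding s_def by (rule power_int_power')
  also have "x * int (p ^ j - 1) = int (c * (p ^ d - 1)) + (- (int c * v)) * int (q - 1)"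
  proof -
    have "x * int (p ^ j - 1) = int c * (u * int (p ^ j - 1))" unfolding x_def by (simp add: mult.assoc)
    also have "u * int (p ^ j - 1) = int (p ^ d - 1) - v * int (p ^ m - 1)" using uv by simp
    finally show ?thesis unfolding qdef of_nat_mult by (auto simp: algebra_simps simp del: of_nat_diff)
  qed
  also have "g powi (int (c * (p ^ d - 1)) + (- (int c * v)) * int (q - 1))
      = g powi int (c * (p ^ d - 1)) * g powi ((- (int c * v)) * int (q - 1))"
    by (rule power_int_add) (simp add: g0)
  also have "g powi ((- (int c * v)) * int (q - 1)) = (g ^ (q - 1)) powi (- (int c * v))"
    by (simp add: power_int_power mult.commute)
  also have "g powi int (c * (p ^ d - 1)) = b" unfolding power_int_of_nat g_def a a' c
    by (simp only: power_mult mult.commute)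
  finally have "s ^ (p ^ j - 1) = b" using gq1 by simp
  moreover have "s ^ (p ^ j) = s ^ (p ^ j - 1) * s"
  proof -
    have e: "p ^ j = Suc (p ^ j - 1)" using pj_ge2 by simp
    show ?thesis by (metis e power_Suc2)
  qed
  ultimately show ?thesis using s0 sq by auto
qed

lemma case4_noninj:
  assumes AB: "A * B \<noteq> 0" and N1: "normF p m d (B / A) = 1"
  shows "\<not> inj P"
proof -
  have A0: "A \<noteq> 0" and B0: "B \<noteq> 0" using AB by auto
  have bq: "(B / A) ^ q = B / A" by (simp add: power_divide Aq Bq)
  obtain s where s: "s \<noteq> 0" "s ^ q = s" "s ^ (p ^ j) = (B / A) * s"
    using exists_root[OF bq _ N1[unfolded normF_def]] A0 B0 by auto
  have "A * s ^ (p ^ i) = B * s" using pow_pi_pj[OF s(2)] s(3) A0 by simp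
  then show ?thesis by (rule noninj[OF s(1) s(2)])
qed

lemma case4:
  "i \<notin> {0, m} \<and> A * B \<noteq> 0 \<longrightarrow>
        (bij P \<longleftrightarrow> normF p m d (B / A) \<noteq> 1) \<and>
        (normF p m d (B / A) \<noteq> 1 \<longrightarrow>
          (let N = normF p m d (B / A);
               Q = (\<lambda>x. G (delta + N / (1 - N) *
                      (\<Sum>k<m div d. (A / B) ^ ((p ^ ((k + 1) * j) - 1) div (p ^ j - 1))
                                     * ((x ^ q + x) / A - C / A) ^ (p ^ (k * j)))) - x)
           in \<forall>c. P (Q c) = c \<and> Q (P c) = c))"
  using case4_inv case4_noninj bij_is_inj by blast

end
theorem theorem3p15:
  fixes p m q i j d t :: nat and d1 d2 d3 :: int
    and \<delta> b1 b2 b3 \<epsilon> :: "'a::{field,finite}"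
    and P G :: "'a \<Rightarrow> 'a" and A B C e1 e2 e3 :: 'a
  assumes "prime p" and "odd p" and "m > 0" and "q = p ^ m"
    and "card (UNIV :: 'a set) = q ^ 2"
    and "b1 ^ q = b1" and "b2 ^ q = b2" and "b3 ^ q = b3"
    and "primitive_elem \<epsilon>"
    and "odd d1" and "odd d2" and "odd d3"
    and "t = (q + 1) div 2"
    and "i < 2 * m" and "j = i mod m" and "d = gcd m j"
    and "e1 = \<epsilon> powi (int t * d1)" and "e2 = \<epsilon> powi (int t * d2)" and "e3 = \<epsilon> powi (int t * d3)"
    and "P = (\<lambda>x. b1 * e1 * (x ^ q + x + \<delta>) ^ (p ^ i + q)
                 + b2 * e2 * (x ^ q + x + \<delta>) ^ (p ^ i + 1)
                 + b3 * e3 * (x ^ q + x + \<delta>) ^ (2 * p ^ i) - x)"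
    and "A = (\<delta> ^ q - \<delta>) * (b1 * e1 - b2 * e2) + 2 * b3 * e3 * (\<delta> ^ (p ^ i) - \<delta> ^ (p ^ i * q))"
    and "B = 1 + (\<delta> ^ (p ^ i * q) - \<delta> ^ (p ^ i)) * (b1 * e1 + b2 * e2)"
    and "C = (\<delta> ^ (p ^ i + q) - \<delta> ^ (p ^ i * q + 1)) * b1 * e1
           + (\<delta> ^ (p ^ i + 1) - \<delta> ^ (p ^ i * q + q)) * b2 * e2
           + (\<delta> ^ (2 * p ^ i) - \<delta> ^ (2 * p ^ i * q)) * b3 * e3"
    and "G = (\<lambda>y. b1 * e1 * y ^ (p ^ i + q) + b2 * e2 * y ^ (p ^ i + 1) + b3 * e3 * y ^ (2 * p ^ i))"
  shows
    "(i \<in> {0, m} \<longrightarrow>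
        (bij P \<longleftrightarrow> A - B \<noteq> 0) \<and>
        (A - B \<noteq> 0 \<longrightarrow>
          (let Q = (\<lambda>x. G (inverse (A - B) * (x ^ q + x) - inverse (A - B) * C + \<delta>) - x)
           in \<forall>c. P (Q c) = c \<and> Q (P c) = c)))
   \<and> (i \<notin> {0, m} \<and> A = 0 \<and> B \<noteq> 0 \<longrightarrow>
        bij P \<and>
        (let Q = (\<lambda>x. G (- inverse B * (x ^ q + x) + inverse B * C + \<delta>) - x)
         in \<forall>c. P (Q c) = c \<and> Q (P c) = c))
   \<and> (i \<notin> {0, m} \<and> A \<noteq> 0 \<and> B = 0 \<longrightarrow>
        bij P \<and>
        (let Q = (\<lambda>x. G (inverse A ^ (p ^ (m - j)) * (x ^ q + x) ^ (p ^ (m - j))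
                          - (C / A) ^ (p ^ (m - j)) + \<delta>) - x)
         in \<forall>c. P (Q c) = c \<and> Q (P c) = c))
   \<and> (i \<notin> {0, m} \<and> A * B \<noteq> 0 \<longrightarrow>
        (bij P \<longleftrightarrow> normF p m d (B / A) \<noteq> 1) \<and>
        (normF p m d (B / A) \<noteq> 1 \<longrightarrow>
          (let N = normF p m d (B / A);
               Q = (\<lambda>x. G (\<delta> + N / (1 - N) *
                      (\<Sum>k<m div d. (A / B) ^ ((p ^ ((k + 1) * j) - 1) div (p ^ j - 1))
                                     * ((x ^ q + x) / A - C / A) ^ (p ^ (k * j)))) - x)
           in \<forall>c. P (Q c) = c \<and> Q (P c) = c)))"
  proof -
  interpret main p m q \<epsilon> i j d t d1 d2 d3 \<delta> b1 b2 b3 P G A B C e1 e2 e3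
    by unfold_locales (use assms in auto)
  have c4: "i \<notin> {0, m} \<and> A * B \<noteq> 0 \<longrightarrow>
        (bij P \<longleftrightarrow> normF p m d (B / A) \<noteq> 1) \<and>
        (normF p m d (B / A) \<noteq> 1 \<longrightarrow>
          (let N = normF p m d (B / A);
               Q = (\<lambda>x. G (\<delta> + N / (1 - N) *
                      (\<Sum>k<m div d. (A / B) ^ ((p ^ ((k + 1) * j) - 1) div (p ^ j - 1))
                                     * ((x ^ q + x) / A - C / A) ^ (p ^ (k * j)))) - x)
           in \<forall>c. P (Q c) = c \<and> Q (P c) = c))"
  proof
    assume h: "i \<notin> {0, m} \<and> A * B \<noteq> 0"
    interpret m4: main4 p m q \<epsilon> i j d t d1 d2 d3 \<delta> b1 b2 b3 P G A B C e1 e2 e3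
      by unfold_locales (use assms h in auto)
    show "(bij P \<longleftrightarrow> normF p m d (B / A) \<noteq> 1) \<and>
        (normF p m d (B / A) \<noteq> 1 \<longrightarrow>
          (let N = normF p m d (B / A);
               Q = (\<lambda>x. G (\<delta> + N / (1 - N) *
                      (\<Sum>k<m div d. (A / B) ^ ((p ^ ((k + 1) * j) - 1) div (p ^ j - 1))
                                     * ((x ^ q + x) / A - C / A) ^ (p ^ (k * j)))) - x)
           in \<forall>c. P (Q c) = c \<and> Q (P c) = c))"
      using m4.case4 h by blast
  qed
  show ?thesis using case1 case2 case3 c4 by blast
qed

end
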